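(* Let $k \geq 0$ be an integer. (i) If $k \leq 6$, then $K_{m,m+k}$ is stable for all integers $m \geq 1$. (ii) If $k \geq 7$, then there exists an integer $N(k)$ such that $K_{m,m+k}$ is stable for all integers $m > N(k)$.
   Context: For a simple graph $G$, the independence polynomial is $i(G,x)=\sum_{k=0}^{\alpha(G)} i_k(G)x^k$, where $i_k(G)$ is the number of independent sets of size $k$ in $G$ (with $i_0(G)=1$) and $\alpha(G)$ is the independence number. A graph $G$ is called stable if every root $z$ of $i(G,x)$ satisfies $\mathrm{Re}(z)\leq 0$. $K_{a,b}$ denotes the complete bipartite graph with parts of sizes $a$ and $b$; its independence polynomial is $(1+x)^a+(1+x)^b-1$. *)

theory Defs
  imports Complex_Main "HOL-Computational_Algebra.Polynomial"
begin

definition simple_graph :: "'v set \<Rightarrow> ('v \<Rightarrow> 'v \<Rightarrow> bool) \<Rightarrow> bool" where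
  "simple_graph V E \<longleftrightarrow> finite V \<and> (\<forall>x y. E x y \<longrightarrow> E y x) \<and> (\<forall>x. \<not> E x x)"

definition indep_set :: "'v set \<Rightarrow> ('v \<Rightarrow> 'v \<Rightarrow> bool) \<Rightarrow> 'v set \<Rightarrow> bool" where
  "indep_set V E S \<longleftrightarrow> S \<subseteq> V \<and> (\<forall>x\<in>S. \<forall>y\<in>S. \<not> E x y)"

definition indep_poly :: "'v set \<Rightarrow> ('v \<Rightarrow> 'v \<Rightarrow> bool) \<Rightarrow> complex poly" where
  "indep_poly V E = (\<Sum>S\<in>{S. indep_set V E S}. monom 1 (card S))"

definition stable :: "'v set \<Rightarrow> ('v \<Rightarrow> 'v \<Rightarrow> bool) \<Rightarrow> bool" where
  "stable V E \<longleftrightarrow> (\<forall>z. poly (indep_poly V E) z = 0 \<longrightarrow> Re z \<le> 0)"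

definition Kbip_V :: "nat \<Rightarrow> nat \<Rightarrow> (nat + nat) set" where
  "Kbip_V a b = Inl ` {..<a} \<union> Inr ` {..<b}"

definition Kbip_E :: "nat + nat \<Rightarrow> nat + nat \<Rightarrow> bool" where
  "Kbip_E x y \<longleftrightarrow> (isl x \<noteq> isl y)"

end

theory Submission
  imports Defs
begin


lemma sum_pow_card:
  fixes z :: complex
  assumes "finite X"
  shows "(\<Sum>S\<in>Pow X. z ^ card S) = (1 + z) ^ card X"
proof -
  have "(\<Prod>x\<in>X. z + 1) = (\<Sum>S\<in>Pow X. (\<Prod>x\<in>S. z) * (\<Prod>x\<in>X-S. 1))"
    by (rule prod_add[OF assms])
  then show ?thesis by (simp add: add.commute)
qed

lemma isl_mem: "x \<in> Inl ` A \<union> Inr ` B \<Longrightarrow> isl x \<Longrightarrow> x \<in> Inl ` A"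
  by auto
lemma nisl_mem: "x \<in> Inl ` A \<union> Inr ` B \<Longrightarrow> \<not> isl x \<Longrightarrow> x \<in> Inr ` B"
  by auto

lemma indep_sets_K:
  "{S. indep_set (Kbip_V a b) Kbip_E S} = Pow (Inl ` {..<a}) \<union> Pow (Inr ` {..<b})"
proof (intro equalityI subsetI)
  fix S assume "S \<in> {S. indep_set (Kbip_V a b) Kbip_E S}"
  then have S0: "indep_set (Kbip_V a b) Kbip_E S" by simp
  have S: "S \<subseteq> Kbip_V a b" "\<forall>x\<in>S. \<forall>y\<in>S. isl x = isl y"
    using S0 unfolding indep_set_def Kbip_E_def by blast+
  show "S \<in> Pow (Inl ` {..<a}) \<union> Pow (Inr ` {..<b})"
  proof (cases "\<exists>x\<in>S. isl x")
    case True
    then obtain x where "x \<in> S" "isl x" by blast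
    then have "\<forall>y\<in>S. isl y" using S(2) by metis
    then have all: "\<forall>y\<in>S. isl y" .
    have "S \<subseteq> Inl ` {..<a}"
    proof
      fix x assume x: "x \<in> S"
      have "x \<in> Inl ` {..<a} \<union> Inr ` {..<b}" using subsetD[OF S(1) x] unfolding Kbip_V_def .
      moreover have "isl x" using all x by blast
      ultimately show "x \<in> Inl ` {..<a}" by (rule isl_mem)
    qed
    then show ?thesis by blast
  next
    case False
    then have all: "\<forall>y\<in>S. \<not> isl y" by blast
    have "S \<subseteq> Inr ` {..<b}"
    proof
      fix x assume x: "x \<in> S"
      have "x \<in> Inl ` {..<a} \<union> Inr ` {..<b}" using subsetD[OF S(1) x] unfolding Kbip_V_def .
      moreover have "\<not> isl x" using all x by blast
      ultimately show "x \<in> Inr ` {..<b}" by (rule nisl_mem)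
    qed
    then show ?thesis by blast
  qed
next
  fix S assume "S \<in> Pow (Inl ` {..<a}) \<union> Pow (Inr ` {..<b})"
  then show "S \<in> {S. indep_set (Kbip_V a b) Kbip_E S}"
    by (auto simp: indep_set_def Kbip_E_def Kbip_V_def)
qed

lemma poly_K:
  "poly (indep_poly (Kbip_V a b) Kbip_E) z = (1 + z) ^ a + (1 + z) ^ b - 1"
proof -
  have i: "Pow (Inl ` {..<a} :: (nat+nat) set) \<inter> Pow (Inr ` {..<b} :: (nat+nat) set) = {{}}" by auto
  have "poly (indep_poly (Kbip_V a b) Kbip_E) z
      = (\<Sum>S\<in>Pow (Inl ` {..<a} :: (nat+nat) set) \<union> Pow (Inr ` {..<b} :: (nat+nat) set). z ^ card S)"
    unfolding indep_poly_def indep_sets_K by (simp add: poly_sum poly_monom)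
  also have "\<dots> = (\<Sum>S\<in>Pow (Inl ` {..<a} :: (nat+nat) set). z ^ card S) + (\<Sum>S\<in>Pow (Inr ` {..<b} :: (nat+nat) set). z ^ card S) - 1"
  proof -
    have "(\<Sum>S\<in>Pow (Inl ` {..<a} :: (nat+nat) set) \<union> Pow (Inr ` {..<b} :: (nat+nat) set). z ^ card S) + (\<Sum>S\<in>Pow (Inl ` {..<a} :: (nat+nat) set) \<inter> Pow (Inr ` {..<b} :: (nat+nat) set). z ^ card S)
       = (\<Sum>S\<in>Pow (Inl ` {..<a} :: (nat+nat) set). z ^ card S) + (\<Sum>S\<in>Pow (Inr ` {..<b} :: (nat+nat) set). z ^ card S)"
      by (rule sum.union_inter) auto
    then show ?thesis unfolding i by (simp add: algebra_simps)
  qed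
  also have "\<dots> = (1 + z) ^ a + (1 + z) ^ b - 1"
    by (simp add: sum_pow_card card_image)
  finally show ?thesis .
qed



lemma cmod1: "(cmod (1 + v))^2 = 1 + 2 * Re v + (cmod v)^2"
  unfolding cmod_power2 by (simp add: power2_eq_square algebra_simps)

lemma normv: "(cmod (Complex 1 t ^ k))^2 = (1 + t^2)^k"
proof -
  have "(cmod (Complex 1 t) ^ k)^2 = (cmod (Complex 1 t) ^ 2)^k" by (simp add: power_mult[symmetric] mult.commute)
  then show ?thesis by (simp add: norm_power cmod_power2)
qed

lemma re6: "Re (Complex 1 t ^ 6) = 1 - 15*t^2 + 15*t^4 - t^6"
  by (simp add: eval_nat_numeral algebra_simps)
lemma re5: "Re (Complex 1 t ^ 5) = 1 - 10*t^2 + 5*t^4"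
  by (simp add: eval_nat_numeral algebra_simps)
lemma re4: "Re (Complex 1 t ^ 4) = 1 - 6*t^2 + t^4"
  by (simp add: eval_nat_numeral algebra_simps)
lemma re3: "Re (Complex 1 t ^ 3) = 1 - 3*t^2"
  by (simp add: eval_nat_numeral algebra_simps)
lemma re2: "Re (Complex 1 t ^ 2) = 1 - t^2"
  by (simp add: eval_nat_numeral algebra_simps)

lemma p6: fixes s :: real assumes "s \<ge> 0"
  shows "1 < (1+s) * (1 + 2*(1 - 15*s + 15*s^2 - s^3) + (1+s)^6)"
proof -
  have a: "0 \<le> 63 * s * (s - 1/4)^2" using assms by simp
  have b: "0 < 105/2 * s^2 - 383/16 * s + 3"
  proof -
    have "0 \<le> 105/2 * (s - 383/1680)^2" by simp
    then show ?thesis by (simp add: power2_eq_square algebra_simps)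
  qed
  have c: "0 \<le> 33*s^4 + 21*s^5 + 7*s^6 + s^7" using assms by simp
  show ?thesis using a b c by (simp add: power2_eq_square eval_nat_numeral algebra_simps)
qed

lemma gen: fixes s q :: real assumes "s \<ge> 0" "1 < q" shows "1 < (1+s) * q"
proof -
  have "0 \<le> q * s" using assms by simp
  moreover have "(1+s)*q = q + q*s" by (simp add: algebra_simps)
  ultimately show ?thesis using assms by linarith
qed

lemma p5: fixes s :: real assumes "s \<ge> 0"
  shows "1 < (1+s) * (1 + 2*(1 - 10*s + 5*s^2) + (1+s)^5)"
proof (rule gen[OF assms])
  have a: "0 \<le> 20 * (s - 3/8)^2" by simp
  have c: "0 \<le> 10*s^3 + 5*s^4 + s^5" using assms by simp
  show "1 < (1 + 2*(1 - 10*s + 5*s^2) + (1+s)^5)" using a c by (simp add: power2_eq_square eval_nat_numeral algebra_simps)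
qed

lemma p4: fixes s :: real assumes "s \<ge> 0"
  shows "1 < (1+s) * (1 + 2*(1 - 6*s + s^2) + (1+s)^4)"
proof (rule gen[OF assms])
  have a: "0 \<le> 8 * (s - 1/2)^2" by simp
  have c: "0 \<le> 4*s^3 + s^4" using assms by simp
  show "1 < (1 + 2*(1 - 6*s + s^2) + (1+s)^4)" using a c by (simp add: power2_eq_square eval_nat_numeral algebra_simps)
qed

lemma p3: fixes s :: real assumes "s \<ge> 0"
  shows "1 < (1+s) * (1 + 2*(1 - 3*s) + (1+s)^3)"
proof (rule gen[OF assms])
  have a: "0 \<le> 3 * (s - 1/2)^2" by simp
  have c: "0 \<le> s^3" using assms by simp
  show "1 < (1 + 2*(1 - 3*s) + (1+s)^3)" using a c by (simp add: power2_eq_square eval_nat_numeral algebra_simps)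
qed

lemma p2: fixes s :: real assumes "s \<ge> 0"
  shows "1 < (1+s) * (1 + 2*(1 - s) + (1+s)^2)"
proof (rule gen[OF assms])
  have a: "0 \<le> s*s" by simp
  have "0 < s*s + 3" using a by linarith
  then show "1 < (1 + 2*(1 - s) + (1+s)^2)" by (simp add: power2_eq_square eval_nat_numeral algebra_simps)
qed

lemma bnd: assumes "k \<le> 6"
  shows "1 < (1+t^2) * (cmod (1 + Complex 1 t ^ k))^2"
proof -
  have e: "(1+t^2) * (cmod (1 + Complex 1 t ^ k))^2 = (1+t^2) * (1 + 2 * Re (Complex 1 t ^ k) + (1+t^2)^k)"
    by (simp add: cmod1 normv)
  have s: "t^2 \<ge> 0" by simp
  have t4: "t^4 = (t^2)^2" "t^6 = (t^2)^3" by (simp_all flip: power_mult)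
  consider "k=0" | "k=1" | "k=2" | "k=3" | "k=4" | "k=5" | "k=6" using assms by linarith
  then have "1 < (1+t^2) * (1 + 2 * Re (Complex 1 t ^ k) + (1+t^2)^k)"
  proof cases
    case 1 then show ?thesis using gen[OF s, of 4] by simp
  next
    case 2
    have "1 < 4 + t^2" using s by linarith
    then show ?thesis using gen[OF s, of "4+t^2"] 2 by simp
  next
    case 3 then show ?thesis using p2[OF s] by (simp add: re2)
  next
    case 4 then show ?thesis using p3[OF s] by (simp add: re3)
  next
    case 5 show ?thesis unfolding 5 re4 t4 by (rule p4[OF s])
  next
    case 6 show ?thesis unfolding 6 re5 t4 by (rule p5[OF s])
  next
    case 7 show ?thesis unfolding 7 re6 t4 by (rule p6[OF s])
  qed
  then show ?thesis using e by linarith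
qed



lemma mono_s: fixes v :: complex and s :: real
  assumes "s \<ge> 1" "cmod v \<ge> 1"
  shows "cmod (1 + v) \<le> cmod (1 + of_real s * v)"
proof -
  have r: "Re v \<ge> - cmod v" using abs_Re_le_cmod[of v] by linarith
  have "(cmod (1 + of_real s * v))^2 = 1 + 2 * s * Re v + s^2 * (cmod v)^2"
    by (simp add: cmod1 norm_mult power_mult_distrib)
  moreover have "(cmod (1 + v))^2 = 1 + 2 * Re v + (cmod v)^2" by (simp add: cmod1)
  moreover have "0 \<le> (s - 1) * (2 * Re v + (s + 1) * (cmod v)^2)"
  proof (rule mult_nonneg_nonneg)
    show "0 \<le> s - 1" using assms by simp
    have "2 * cmod v \<le> (s+1) * (cmod v)^2"
    proof -
      have "cmod v * 1 \<le> cmod v * cmod v" using assms by (intro mult_left_mono) auto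
      then have "2 * cmod v \<le> 2 * (cmod v * cmod v)" by simp
      also have "\<dots> \<le> (s+1) * (cmod v)^2"
        using assms mult_right_mono[of 2 "s+1" "cmod v * cmod v"] by (auto simp: power2_eq_square)
      finally show ?thesis .
    qed
    then show "0 \<le> 2 * Re v + (s + 1) * (cmod v)^2" using r by linarith
  qed
  ultimately have "(cmod (1 + v))^2 \<le> (cmod (1 + of_real s * v))^2"
    by (simp add: algebra_simps power2_eq_square)
  then show ?thesis by (simp add: power_mono_iff)
qed

lemma partC:
  fixes w :: complex
  assumes "Re w > 1" "k \<le> 6" "m \<ge> 1"
  shows "cmod (w ^ m * (1 + w ^ k)) > 1"
proof -
  define a where "a = Re w"
  define t where "t = Im w / a"
  have a1: "a > 1" using assms a_def by simp
  have wd: "w = of_real a * Complex 1 t"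
    using a1 by (simp add: complex_eq_iff a_def t_def)
  have nv: "cmod (Complex 1 t) \<ge> 1"
    by (simp add: cmod_def)
  have "cmod (1 + Complex 1 t ^ k) \<le> cmod (1 + of_real (a^k) * Complex 1 t ^ k)"
    using a1 nv by (intro mono_s) (auto simp: norm_power one_le_power)
  also have "\<dots> = cmod (1 + w ^ k)" by (simp add: wd power_mult_distrib)
  finally have h1: "cmod (1 + Complex 1 t ^ k) \<le> cmod (1 + w ^ k)" .
  have h2: "cmod (Complex 1 t) \<le> cmod w"
    using a1 mult_right_mono[of 1 a "cmod (Complex 1 t)"] by (simp add: wd norm_mult)
  have "1 < (1+t^2) * (cmod (1 + Complex 1 t ^ k))^2" by (rule bnd[OF assms(2)])
  also have "(1+t^2) = (cmod (Complex 1 t))^2" by (simp add: cmod_power2)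
  finally have "1 < (cmod (Complex 1 t) * cmod (1 + Complex 1 t ^ k))^2"
    by (simp add: power_mult_distrib)
  then have "1 < cmod (Complex 1 t) * cmod (1 + Complex 1 t ^ k)"
    by (smt (verit) one_less_power zero_le_mult_iff norm_ge_zero power_le_one)
  also have "\<dots> \<le> cmod w * cmod (1 + w ^ k)"
    using h1 h2 by (intro mult_mono) auto
  also have "\<dots> \<le> cmod w ^ m * cmod (1 + w ^ k)"
  proof (rule mult_right_mono)
    have "cmod w \<ge> 1" using nv h2 by linarith
    then show "cmod w \<le> cmod w ^ m" using assms(3)
      by (metis power_increasing power_one_right)
  qed simp
  finally show ?thesis by (simp add: norm_mult norm_power)
qed



lemma pow_diff_bound:
  fixes w :: complex
  shows "cmod (w ^ n - 1) \<le> (1 + cmod (w - 1)) ^ n - 1"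
proof (induction n)
  case 0 then show ?case by simp
next
  case (Suc n)
  define d where "d = cmod (w - 1)"
  have r: "cmod w \<le> 1 + d"
    using norm_triangle_ineq[of 1 "w - 1"] by (simp add: d_def)
  have "w ^ Suc n - 1 = w * (w ^ n - 1) + (w - 1)" by (simp add: algebra_simps)
  then have "cmod (w ^ Suc n - 1) \<le> cmod w * cmod (w ^ n - 1) + d"
    by (metis d_def norm_mult norm_triangle_ineq)
  also have "\<dots> \<le> (1 + d) * ((1 + d) ^ n - 1) + d"
    using Suc r by (intro add_right_mono mult_mono) (auto simp: d_def)
  also have "\<dots> = (1 + d) ^ Suc n - 1" by (simp add: algebra_simps)
  finally show ?case by (simp add: d_def)
qed

lemma exp_third: "exp (1/3 :: real) < 2"
proof -
  have "1 + (-1/3) \<le> exp (-1/3 :: real)" by (rule exp_ge_add_one_self)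
  then have "2/3 \<le> exp (-1/3 :: real)" by simp
  moreover have "exp (1/3 :: real) * exp (-1/3) = 1" by (simp flip: exp_add)
  ultimately have "exp (1/3 :: real) * (2/3) \<le> 1"
    by (metis exp_gt_zero less_eq_real_def mult_left_mono)
  then show ?thesis by simp
qed

lemma partD:
  fixes w :: complex
  assumes "Re w > 1" "k \<ge> 1" "real m > 729 * real k ^ 4"
  shows "w ^ m * (1 + w ^ k) \<noteq> 1"
proof
  assume eq0: "w ^ m * (1 + w ^ k) = 1"
  define r where "r = cmod w"
  define e where "e = r - 1"
  define d where "d = cmod (w - 1)"
  define c where "c = cmod (1 + w ^ k)"
  have r1: "r > 1" using complex_Re_le_cmod[of w] assms(1) r_def by linarith
  have e0: "e > 0" using r1 e_def by simp
  have eq: "r ^ m * c = 1" using arg_cong[OF eq0, of cmod] by (simp add: norm_mult norm_power r_def c_def)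
  have m1: "m \<ge> 1"
  proof -
    have "real k ^ 4 \<ge> 1" using assms(2) by simp
    then show ?thesis using assms(3) by (simp add: Suc_le_eq) 
  qed
  have rm: "r ^ m > 1" using r1 m1 by (simp add: one_less_power)
  have c1: "c < 1"
  proof (rule ccontr)
    assume "\<not> c < 1"
    then have "r ^ m * 1 \<le> r ^ m * c" using rm by (intro mult_left_mono) auto
    then show False using eq rm by simp
  qed
  have c2: "r ^ k - 1 \<le> c"
    using norm_triangle_ineq4[of "1 + w^k" 1] by (simp add: c_def r_def norm_power)
  have c3: "r \<le> r ^ k" using r1 assms(2) by (metis less_imp_le power_increasing power_one_right)
  have bern: "1 + real m * e \<le> r ^ m" using Bernoulli_inequality[of e m] e0 by (simp add: e_def)
  have "(1 + real m * e) * e \<le> r ^ m * c"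
    using bern c2 c3 e0 e_def by (intro mult_mono) auto
  then have me: "real m * e^2 < 1" using eq e0 by (simp add: algebra_simps power2_eq_square)
  have "2 \<le> c + cmod (w ^ k - 1)"
    using norm_triangle_ineq4[of "1 + w^k" "w^k - 1"] by (simp add: c_def)
  then have "cmod (w ^ k - 1) > 1" using c1 by linarith
  then have pd: "(1 + d) ^ k > 2" using pow_diff_bound[of w k] by (simp add: d_def)
  have d3: "d > 1 / (3 * real k)"
  proof (rule ccontr)
    assume "\<not> d > 1 / (3 * real k)"
    then have dle: "real k * d \<le> 1/3" using assms(2) by (simp add: field_simps)
    have "(1 + d) ^ k \<le> exp d ^ k"
      by (intro power_mono) (auto simp: d_def)
    also have "\<dots> = exp (real k * d)" by (simp add: exp_of_nat_mult)
    also have "\<dots> \<le> exp (1/3)" using dle by simp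
    finally show False using pd exp_third by linarith
  qed
  have dd: "d^2 < e * (e + 2)"
  proof -
    have "d^2 = (Re w - 1)^2 + (Im w)^2" by (simp add: d_def cmod_power2)
    moreover have "r^2 = (Re w)^2 + (Im w)^2" by (simp add: r_def cmod_power2)
    ultimately have "d^2 = r^2 - 2 * Re w + 1" by (simp add: power2_eq_square algebra_simps)
    then show ?thesis using assms(1) by (simp add: e_def power2_eq_square algebra_simps)
  qed
  have k0: "real k \<ge> 1" using assms(2) by simp
  show False
  proof (cases "e < 1")
    case False
    then have "1 \<le> e^2" using one_le_power by (simp add: not_less)
    then have "real m \<le> real m * e^2" by (simp add: mult_le_cancel_left1)
    moreover have "real m > 1" using assms(3) k0
      by (smt (verit) one_le_power)
    ultimately show False using me by linarith
  next
    case True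
    have "1 / (3 * real k) \<ge> 0" by simp
    then have "(1 / (3 * real k))^2 < d^2" using d3 by (intro power_strict_mono) auto
    also have "\<dots> < 3 * e"
    proof -
      have "e * (e + 2) \<le> e * 3" using True e0 by (intro mult_left_mono) auto
      then show ?thesis using dd by linarith
    qed
    finally have "1 / (27 * real k ^ 2) < e" by (simp add: power2_eq_square field_simps)
    then have "(1 / (27 * real k ^ 2))^2 < e^2" by (intro power_strict_mono) auto
    then have "1 / (729 * real k ^ 4) < e^2" by (simp add: power2_eq_square field_simps eval_nat_numeral)
    then have "real m * (1 / (729 * real k ^ 4)) < real m * e^2" using m1 by (intro mult_strict_left_mono) auto
    moreover have "real m * (1 / (729 * real k ^ 4)) > 1" using assms(3) k0 by (simp add: field_simps)
    ultimately show False using me by linarith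
  qed
qed

lemma eq_form: "(1 + z) ^ m + (1 + z) ^ (m + k) - 1 = (0::complex) \<Longrightarrow> (1 + z) ^ m * (1 + (1 + z) ^ k) = 1"
proof -
  assume h: "(1 + z) ^ m + (1 + z) ^ (m + k) - 1 = (0::complex)"
  have "(1 + z) ^ m * (1 + (1 + z) ^ k) = (1 + z) ^ m + (1 + z) ^ (m + k)"
    by (simp only: power_add distrib_left mult_1_right)
  then show ?thesis using h by simp
qed

theorem theorem3:
  shows "(\<forall>k m :: nat. k \<le> 6 \<longrightarrow> m \<ge> 1 \<longrightarrow> stable (Kbip_V m (m + k)) Kbip_E)
       \<and> (\<forall>k :: nat. k \<ge> 7 \<longrightarrow>
            (\<exists>N :: int. \<forall>m :: nat. int m > N \<longrightarrow> stable (Kbip_V m (m + k)) Kbip_E))"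
proof (intro conjI allI impI)
  fix k m :: nat
  assume k: "k \<le> 6" and m: "m \<ge> 1"
  show "stable (Kbip_V m (m + k)) Kbip_E"
    unfolding stable_def
  proof (intro allI impI)
    fix z assume "poly (indep_poly (Kbip_V m (m + k)) Kbip_E) z = 0"
    then have e: "(1 + z) ^ m * (1 + (1 + z) ^ k) = 1" by (intro eq_form) (simp add: poly_K)
    show "Re z \<le> 0"
    proof (rule ccontr)
      assume "\<not> Re z \<le> 0"
      then have "Re (1 + z) > 1" by simp
      moreover have "cmod ((1 + z) ^ m * (1 + (1 + z) ^ k)) = 1" using e by (simp only: norm_one)
      ultimately show False using partC[OF _ k m] by fastforce
    qed
  qed
next
  fix k :: nat assume k: "k \<ge> 7"
  show "\<exists>N :: int. \<forall>m :: nat. int m > N \<longrightarrow> stable (Kbip_V m (m + k)) Kbip_E"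
  proof (rule exI[of _ "729 * int k ^ 4"], intro allI impI)
    fix m :: nat assume "int m > 729 * int k ^ 4"
    then have "real_of_int (int m) > real_of_int (729 * int k ^ 4)" by (simp only: of_int_less_iff)
    then have mm: "real m > 729 * real k ^ 4" by simp
    show "stable (Kbip_V m (m + k)) Kbip_E"
      unfolding stable_def
    proof (intro allI impI)
      fix z assume "poly (indep_poly (Kbip_V m (m + k)) Kbip_E) z = 0"
      then have e: "(1 + z) ^ m * (1 + (1 + z) ^ k) = 1" by (intro eq_form) (simp add: poly_K)
      show "Re z \<le> 0"
      proof (rule ccontr)
        assume "\<not> Re z \<le> 0"
        then have "Re (1 + z) > 1" by simp
        moreover have "1 \<le> k" using k by linarith
        ultimately have "(1 + z) ^ m * (1 + (1 + z) ^ k) \<noteq> 1" using partD mm by blast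
        then show False using e by contradiction
      qed
    qed
  qed
qed

end
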